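(* Let $(X,d)$ be a complete metric space and $\{f_{\eta_k}:\eta_k\in B^{[k]},k\in\mathbb{N}\}$ a binary tree of continuous maps $X\to X$. Suppose there is a nonempty compact $C\subseteq X$ with $f_{\eta_k}(C)\subseteq C$ for all finite codes $\eta_k$, that each $f_{\eta_k}$ is Lipschitz with constant $s_{\eta_k}$, and that $\sum_{k=1}^\infty\prod_{i=1}^k s_{\tau_i\eta}<\infty$ for every $\eta\in B^{[\infty]}$. Then the set $$U_{TM}=\bigcup_{\eta\in B^{[\infty]}}\lim_{k\to\infty}f_{\tau_1\eta}\circ\cdots\circ f_{\tau_{k-1}\eta}\circ f_{\tau_k\eta}(x)\subseteq C$$ is well defined (all the limits exist) and is the same set for every $x\in C$.
   Context: $B^{[k]}=\{1,2\}^k$ is the set of binary codes $\eta_k=(i_1\ldots i_k)$ of length $k$, $B^{[\infty]}=\{1,2\}^{\mathbb{N}}$ the set of infinite codes, and $\tau_\ell\eta=(i_1\ldots i_\ell)$ the truncation of $\eta$ to its first $\ell$ symbols. A binary tree of maps assigns to each finite code $\eta_k$ a continuous map $f_{\eta_k}:X\to X$. *)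

theory Defs
  imports "HOL-Analysis.Analysis"
begin

definition fin_codes :: "nat \<Rightarrow> nat list set" where
  "fin_codes k = {xs. length xs = k \<and> set xs \<subseteq> {1,2}}"

definition inf_codes :: "(nat \<Rightarrow> nat) set" where
  "inf_codes = {\<eta>. \<forall>n. \<eta> n \<in> {1,2}}"

definition trunc :: "nat \<Rightarrow> (nat \<Rightarrow> nat) \<Rightarrow> nat list" where
  "trunc l \<eta> = map \<eta> [0..<l]"

text \<open>tree_comp f eta k = f (trunc 1 eta) o ... o f (trunc k eta)\<close>
fun tree_comp :: "(nat list \<Rightarrow> 'a \<Rightarrow> 'a) \<Rightarrow> (nat \<Rightarrow> nat) \<Rightarrow> nat \<Rightarrow> 'a \<Rightarrow> 'a" where
  "tree_comp f \<eta> 0 = id"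
| "tree_comp f \<eta> (Suc k) = tree_comp f \<eta> k \<circ> f (trunc (Suc k) \<eta>)"

end

theory Submission
  imports Defs
begin

lemma cauchy_from_summable:
  fixes a :: "nat \<Rightarrow> 'a::metric_space"
  assumes d: "\<And>n. dist (a n) (a (Suc n)) \<le> b n" and sb: "summable b"
  shows "Cauchy a"
proof -
  have b0: "\<And>n. 0 \<le> b n" using d zero_le_dist order_trans by blast
  have le: "dist (a m) (a n) \<le> sum b {m..<n}" if "m \<le> n" for m n
    using that
  proof (induction n rule: dec_induct)
    case base then show ?case by simp
  next
    case (step n)
    have "dist (a m) (a (Suc n)) \<le> dist (a m) (a n) + dist (a n) (a (Suc n))"
      by (rule dist_triangle)
    also have "\<dots> \<le> sum b {m..<n} + b n" using step.IH d[of n] by linarith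
    also have "\<dots> = sum b {m..<Suc n}" using step.hyps by simp
    finally show ?case .
  qed
  define S where "S n = sum b {..<n}" for n
  have "convergent S" using sb unfolding S_def by (simp add: summable_iff_convergent)
  then have CS: "Cauchy S" by (simp add: convergent_Cauchy)
  have diff: "sum b {m..<n} = S n - S m" if "m \<le> n" for m n
  proof -
    have "S n = S m + sum b {m..<n}" unfolding S_def
      using that by (metis atLeast0LessThan le0 sum.atLeastLessThan_concat)
    then show ?thesis by simp
  qed
  show ?thesis
  proof (rule metric_CauchyI)
    fix e :: real assume "0 < e"
    then obtain M where M: "\<And>m n. m \<ge> M \<Longrightarrow> n \<ge> M \<Longrightarrow> dist (S m) (S n) < e"
      using CS metric_CauchyD by blast
    have "dist (a m) (a n) < e" if "m \<ge> M" "n \<ge> M" for m n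
    proof (cases "m \<le> n")
      case True
      have "dist (a m) (a n) \<le> S n - S m" using le[OF True] diff[OF True] by simp
      also have "\<dots> \<le> dist (S m) (S n)" by (simp add: dist_real_def)
      finally show ?thesis using M[OF that] by linarith
    next
      case False
      then have F: "n \<le> m" by simp
      have "dist (a m) (a n) \<le> S m - S n" using le[OF F] diff[OF F] by (simp add: dist_commute)
      also have "\<dots> \<le> dist (S m) (S n)" by (simp add: dist_real_def)
      finally show ?thesis using M[OF that] by linarith
    qed
    then show "\<exists>M. \<forall>m\<ge>M. \<forall>n\<ge>M. dist (a m) (a n) < e" by blast
  qed
qed

lemma trunc_in: "\<eta> \<in> inf_codes \<Longrightarrow> trunc i \<eta> \<in> fin_codes i"
  by (auto simp: inf_codes_def fin_codes_def trunc_def)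

theorem mainTheorem2:
  fixes f :: "nat list \<Rightarrow> 'a::complete_space \<Rightarrow> 'a"
    and s :: "nat list \<Rightarrow> real"
    and C :: "'a set"
  assumes cont: "\<And>k c. k \<ge> 1 \<Longrightarrow> c \<in> fin_codes k \<Longrightarrow> continuous_on UNIV (f c)"
    and C_cpt: "compact C" and C_ne: "C \<noteq> {}"
    and C_inv: "\<And>k c. k \<ge> 1 \<Longrightarrow> c \<in> fin_codes k \<Longrightarrow> f c ` C \<subseteq> C"
    and lip: "\<And>k c. k \<ge> 1 \<Longrightarrow> c \<in> fin_codes k \<Longrightarrow> (s c)-lipschitz_on UNIV (f c)"
    and summ: "\<And>\<eta>. \<eta> \<in> inf_codes \<Longrightarrow>
                 summable (\<lambda>k. \<Prod>i\<in>{1..Suc k}. s (trunc i \<eta>))"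
  shows "(\<forall>\<eta>\<in>inf_codes. \<forall>x\<in>C. convergent (\<lambda>k. tree_comp f \<eta> k x))
       \<and> (\<forall>x\<in>C. (\<Union>\<eta>\<in>inf_codes. {lim (\<lambda>k. tree_comp f \<eta> k x)}) \<subseteq> C)
       \<and> (\<forall>x\<in>C. \<forall>y\<in>C. (\<Union>\<eta>\<in>inf_codes. {lim (\<lambda>k. tree_comp f \<eta> k x)})
                        = (\<Union>\<eta>\<in>inf_codes. {lim (\<lambda>k. tree_comp f \<eta> k y)}))"
proof -
  define P where "P \<eta> k = (\<Prod>i\<in>{1..k}. s (trunc i \<eta>))" for \<eta> k
  have lipk: "0 \<le> P \<eta> k \<and> (\<forall>x y. dist (tree_comp f \<eta> k x) (tree_comp f \<eta> k y) \<le> P \<eta> k * dist x y)"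
    if "\<eta> \<in> inf_codes" for \<eta> k
  proof (induction k)
    case 0 then show ?case by (simp add: P_def)
  next
    case (Suc k)
    define c where "c = trunc (Suc k) \<eta>"
    have L: "(s c)-lipschitz_on UNIV (f c)" unfolding c_def
      using lip[of "Suc k"] trunc_in[OF that] by simp
    have s0: "0 \<le> s c" using lipschitz_on_nonneg[OF L] .
    have PS: "P \<eta> (Suc k) = P \<eta> k * s c" unfolding P_def c_def by (simp add: prod.cl_ivl_Suc)
    have "dist (tree_comp f \<eta> (Suc k) x) (tree_comp f \<eta> (Suc k) y) \<le> P \<eta> (Suc k) * dist x y" for x y
    proof -
      have "dist (tree_comp f \<eta> (Suc k) x) (tree_comp f \<eta> (Suc k) y)
          = dist (tree_comp f \<eta> k (f c x)) (tree_comp f \<eta> k (f c y))" by (simp add: c_def)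
      also have "\<dots> \<le> P \<eta> k * dist (f c x) (f c y)" using Suc by blast
      also have "\<dots> \<le> P \<eta> k * (s c * dist x y)"
        using Suc lipschitz_onD[OF L] by (simp add: mult_left_mono)
      finally show ?thesis by (simp add: PS mult.assoc)
    qed
    then show ?case using Suc s0 PS by simp
  qed
  have inC: "tree_comp f \<eta> k x \<in> C" if "\<eta> \<in> inf_codes" "x \<in> C" for \<eta> k x
    using that(2)
  proof (induction k arbitrary: x)
    case 0 then show ?case by simp
  next
    case (Suc k)
    have "f (trunc (Suc k) \<eta>) x \<in> C" using C_inv[of "Suc k" "trunc (Suc k) \<eta>"] trunc_in[OF that(1), of "Suc k"] Suc.prems by auto
    then show ?case using Suc.IH by simp
  qed
  have bC: "bounded C" using C_cpt compact_imp_bounded by blast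
  define D where "D = diameter C"
  have dD: "dist x y \<le> D" if "x \<in> C" "y \<in> C" for x y
    using diameter_bounded_bound[OF bC that] D_def by simp
  have sumP: "summable (P \<eta>)" if "\<eta> \<in> inf_codes" for \<eta>
  proof -
    have "summable (\<lambda>k. P \<eta> (Suc k))" using summ[OF that] unfolding P_def .
    then show ?thesis by (rule summable_Suc_iff[THEN iffD1])
  qed
  have P0: "P \<eta> \<longlonglongrightarrow> 0" if "\<eta> \<in> inf_codes" for \<eta>
    using summable_LIMSEQ_zero[OF sumP[OF that]] .
  have conv: "convergent (\<lambda>k. tree_comp f \<eta> k x)" if "\<eta> \<in> inf_codes" "x \<in> C" for \<eta> x
  proof -
    have "dist (tree_comp f \<eta> k x) (tree_comp f \<eta> (Suc k) x) \<le> P \<eta> k * D" for k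
    proof -
      have fx: "f (trunc (Suc k) \<eta>) x \<in> C" using C_inv[of "Suc k" "trunc (Suc k) \<eta>"] trunc_in[OF that(1), of "Suc k"] that(2) by auto
      have "dist (tree_comp f \<eta> k x) (tree_comp f \<eta> (Suc k) x)
          = dist (tree_comp f \<eta> k x) (tree_comp f \<eta> k (f (trunc (Suc k) \<eta>) x))" by simp
      also have "\<dots> \<le> P \<eta> k * dist x (f (trunc (Suc k) \<eta>) x)" using lipk[OF that(1), of k] by simp
      also have "\<dots> \<le> P \<eta> k * D" using lipk[OF that(1), of k] dD[OF that(2) fx] by (intro mult_left_mono) simp_all
      finally show ?thesis .
    qed
    moreover have "summable (\<lambda>k. P \<eta> k * D)" using sumP[OF that(1)] by (rule summable_mult2)
    ultimately have "Cauchy (\<lambda>k. tree_comp f \<eta> k x)" by (rule cauchy_from_summable)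
    then show ?thesis by (rule Cauchy_convergent)
  qed
  have limC: "lim (\<lambda>k. tree_comp f \<eta> k x) \<in> C" if "\<eta> \<in> inf_codes" "x \<in> C" for \<eta> x
  proof -
    have "(\<lambda>k. tree_comp f \<eta> k x) \<longlonglongrightarrow> lim (\<lambda>k. tree_comp f \<eta> k x)"
      using conv[OF that] by (simp add: convergent_LIMSEQ_iff)
    moreover have "closed C" using C_cpt compact_imp_closed by blast
    ultimately show ?thesis using closed_sequentially[where f="\<lambda>k. tree_comp f \<eta> k x"] inC[OF that] by blast
  qed
  have limeq: "lim (\<lambda>k. tree_comp f \<eta> k x) = lim (\<lambda>k. tree_comp f \<eta> k y)"
    if "\<eta> \<in> inf_codes" "x \<in> C" "y \<in> C" for \<eta> x y
  proof -
    let ?Lx = "lim (\<lambda>k. tree_comp f \<eta> k x)" and ?Ly = "lim (\<lambda>k. tree_comp f \<eta> k y)"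
    have tx: "(\<lambda>k. tree_comp f \<eta> k x) \<longlonglongrightarrow> ?Lx" using conv[OF that(1,2)] by (simp add: convergent_LIMSEQ_iff)
    have ty: "(\<lambda>k. tree_comp f \<eta> k y) \<longlonglongrightarrow> ?Ly" using conv[OF that(1,3)] by (simp add: convergent_LIMSEQ_iff)
    have t1: "(\<lambda>k. dist (tree_comp f \<eta> k x) (tree_comp f \<eta> k y)) \<longlonglongrightarrow> dist ?Lx ?Ly"
      using tendsto_dist[OF tx ty] .
    have PD: "(\<lambda>k. P \<eta> k * D) \<longlonglongrightarrow> 0" using tendsto_mult[OF P0[OF that(1)] tendsto_const[of D]] by simp
    have t2: "(\<lambda>k. dist (tree_comp f \<eta> k x) (tree_comp f \<eta> k y)) \<longlonglongrightarrow> 0"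
    proof (rule tendsto_sandwich[OF _ _ tendsto_const PD])
      show "\<forall>\<^sub>F n in sequentially. 0 \<le> dist (tree_comp f \<eta> n x) (tree_comp f \<eta> n y)" by (intro always_eventually) simp
      have "dist (tree_comp f \<eta> n x) (tree_comp f \<eta> n y) \<le> P \<eta> n * D" for n
      proof -
        have "dist (tree_comp f \<eta> n x) (tree_comp f \<eta> n y) \<le> P \<eta> n * dist x y" using lipk[OF that(1), of n] by simp
        also have "\<dots> \<le> P \<eta> n * D" using lipk[OF that(1), of n] dD[OF that(2,3)] by (intro mult_left_mono) simp_all
        finally show ?thesis .
      qed
      then show "\<forall>\<^sub>F n in sequentially. dist (tree_comp f \<eta> n x) (tree_comp f \<eta> n y) \<le> P \<eta> n * D" by (intro always_eventually) simp
    qed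
    have "dist ?Lx ?Ly = 0" using LIMSEQ_unique[OF t1 t2] .
    then show ?thesis by simp
  qed
  have A: "\<forall>\<eta>\<in>inf_codes. \<forall>x\<in>C. convergent (\<lambda>k. tree_comp f \<eta> k x)" using conv by blast
  have B: "\<forall>x\<in>C. (\<Union>\<eta>\<in>inf_codes. {lim (\<lambda>k. tree_comp f \<eta> k x)}) \<subseteq> C" using limC by blast
  have E: "\<forall>x\<in>C. \<forall>y\<in>C. (\<Union>\<eta>\<in>inf_codes. {lim (\<lambda>k. tree_comp f \<eta> k x)})
                        = (\<Union>\<eta>\<in>inf_codes. {lim (\<lambda>k. tree_comp f \<eta> k y)})"
  proof (intro ballI)
    fix x y assume "x \<in> C" "y \<in> C"
    show "(\<Union>\<eta>\<in>inf_codes. {lim (\<lambda>k. tree_comp f \<eta> k x)})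
                        = (\<Union>\<eta>\<in>inf_codes. {lim (\<lambda>k. tree_comp f \<eta> k y)})"
    proof (rule SUP_cong[OF refl])
      fix \<eta> assume "\<eta> \<in> inf_codes"
      show "{lim (\<lambda>k. tree_comp f \<eta> k x)} = {lim (\<lambda>k. tree_comp f \<eta> k y)}"
        using limeq[OF \<open>\<eta> \<in> inf_codes\<close> \<open>x \<in> C\<close> \<open>y \<in> C\<close>] by (rule arg_cong)
    qed
  qed
  show ?thesis using A B E by (intro conjI)
qed

end
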